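(* Assume the Population Invariant holds at all times and $n_0$ is sufficiently large (in particular $n_0\ge 40$). Then with high probability, for every interval $(t,t']$, the number $a$ of good IDs that join during the interval satisfies $a\le 23|S(t)|+4$.
   Context: Model. Time is continuous. At each time $x$ the system consists of a finite set $S(x)$ of IDs partitioned into good IDs $G(x)$ and bad IDs $B(x)=S(x)\setminus G(x)$. Membership changes only by join events (a new ID, never previously present, is added) and departure events (one ID removed), each at a distinct time. $|G(x)|\ge n_0$ for all $x$. Whenever a good ID departs (the adversary may choose when), the departing ID is chosen independently and uniformly at random from the set of good IDs currently in the system. Population Invariant: $|B(x)|<\frac16|S(x)|$ for all $x$. $A\triangle B$ is symmetric difference. The system lifetime consists of $n_0^{\gamma}$ join/departure events for a fixed constant $\gamma>0$; "with high probability" means with probability at least $1-O(1/n_0)$ over the system lifetime. Intervals: an interval beginning at time $t$ ends at the first time $t'>t$ with $|S(t')\triangle S(t)|\ge\frac58|S(t')|$ (so $|S(t')\triangle S(t)|=\lceil\frac58|S(t')|\rceil$), and the next interval starts at $t'$. *)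

theory Defs
  imports "HOL-Probability.Probability"
begin

text \<open>
  A state is a triple (G, B, k):
  G = set of good IDs present, B = set of bad IDs present, k = a counter such that
  every ID ever present is < k (so ID k is guaranteed never to have been present).
  Time is indexed by the number of join/departure events so far; state i of a
  trajectory is the system state after the i-th event.
\<close>

type_synonym st = "nat set \<times> nat set \<times> nat"

definition goodS :: "st \<Rightarrow> nat set" where "goodS s = fst s"
definition badS  :: "st \<Rightarrow> nat set" where "badS s = fst (snd s)"
definition allS  :: "st \<Rightarrow> nat set" where "allS s = goodS s \<union> badS s"
definition ctr   :: "st \<Rightarrow> nat" where "ctr s = snd (snd s)"

datatype act = JoinGood | JoinBad | DepartBad nat | DepartGood

definition step :: "act \<Rightarrow> st \<Rightarrow> st pmf" where
  "step a s = (case a of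
      JoinGood \<Rightarrow> return_pmf (insert (ctr s) (goodS s), badS s, Suc (ctr s))
    | JoinBad \<Rightarrow> return_pmf (goodS s, insert (ctr s) (badS s), Suc (ctr s))
    | DepartBad x \<Rightarrow> return_pmf (goodS s, badS s - {x}, ctr s)
    | DepartGood \<Rightarrow> map_pmf (\<lambda>y. (goodS s - {y}, badS s, ctr s)) (pmf_of_set (goodS s)))"

definition legal :: "act \<Rightarrow> st \<Rightarrow> bool" where
  "legal a s = (case a of
      DepartBad x \<Rightarrow> x \<in> badS s
    | DepartGood \<Rightarrow> goodS s \<noteq> {}
    | _ \<Rightarrow> True)"

text \<open>An (adaptive) adversary maps the history so far (list of states, oldest first)
  to the next action.  traj adv s0 n is the distribution of the history after n events.\<close>
primrec traj :: "(st list \<Rightarrow> act) \<Rightarrow> st \<Rightarrow> nat \<Rightarrow> st list pmf" where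
  "traj adv s0 0 = return_pmf [s0]"
| "traj adv s0 (Suc n) =
     bind_pmf (traj adv s0 n) (\<lambda>h. map_pmf (\<lambda>s. h @ [s]) (step (adv h) (last h)))"

definition wf_init :: "st \<Rightarrow> bool" where
  "wf_init s \<longleftrightarrow> finite (goodS s) \<and> finite (badS s) \<and> goodS s \<inter> badS s = {}
                 \<and> (\<forall>x \<in> allS s. x < ctr s)"

definition invs :: "nat \<Rightarrow> st \<Rightarrow> bool" where
  "invs n0 s \<longleftrightarrow> n0 \<le> card (goodS s) \<and> 6 * card (badS s) < card (allS s)"

definition admissible :: "nat \<Rightarrow> nat \<Rightarrow> (st list \<Rightarrow> act) \<Rightarrow> st \<Rightarrow> bool" where
  "admissible n0 L adv s0 \<longleftrightarrow> wf_init s0 \<and>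
     (\<forall>h \<in> set_pmf (traj adv s0 L).
        (\<forall>i \<le> L. invs n0 (h ! i)) \<and> (\<forall>i < L. legal (adv (take (Suc i) h)) (h ! i)))"

definition ends_at :: "st list \<Rightarrow> nat \<Rightarrow> nat \<Rightarrow> bool" where
  "ends_at h t t' \<longleftrightarrow> t < t' \<and> t' < length h \<and>
     8 * card (allS (h ! t') - allS (h ! t) \<union> (allS (h ! t) - allS (h ! t'))) \<ge> 5 * card (allS (h ! t'))
     \<and> (\<forall>u. t < u \<and> u < t' \<longrightarrow>
          \<not> 8 * card (allS (h ! u) - allS (h ! t) \<union> (allS (h ! t) - allS (h ! u))) \<ge> 5 * card (allS (h ! u)))"

inductive interval_start :: "st list \<Rightarrow> nat \<Rightarrow> bool" for h where
  "interval_start h 0"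
| "interval_start h t \<Longrightarrow> ends_at h t t' \<Longrightarrow> interval_start h t'"

definition is_interval :: "st list \<Rightarrow> nat \<Rightarrow> nat \<Rightarrow> bool" where
  "is_interval h t t' \<longleftrightarrow> interval_start h t \<and> ends_at h t t'"

text \<open>Number of good joins during the interval (t,t'], i.e. at events t+1, ..., t'.\<close>
definition good_joins :: "(st list \<Rightarrow> act) \<Rightarrow> st list \<Rightarrow> nat \<Rightarrow> nat \<Rightarrow> nat" where
  "good_joins adv h t t' = card {m. t \<le> m \<and> m < t' \<and> adv (take (Suc m) h) = JoinGood}"

definition lifetime :: "real \<Rightarrow> nat \<Rightarrow> nat" where
  "lifetime \<gamma> n0 = nat \<lfloor>real n0 powr \<gamma>\<rfloor>"

end

theory Submission
  imports Defs "HOL-Real_Asymp.Real_Asymp"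
begin


lemma step_wf:
  assumes "s \<in> set_pmf (step a x)" "wf_init x"
  shows "wf_init s \<and> ctr x \<le> ctr s"
proof (cases a)
  case DepartGood
  then obtain y where "s = (goodS x - {y}, badS x, ctr x)"
    using assms(1) by (auto simp: step_def)
  then show ?thesis using assms(2) by (auto simp: wf_init_def goodS_def badS_def allS_def ctr_def)
qed (use assms in \<open>auto simp: step_def wf_init_def goodS_def badS_def allS_def ctr_def less_Suc_eq\<close>)

lemma traj_support:
  assumes "h \<in> set_pmf (traj adv s0 n)" "wf_init s0"
  shows "length h = Suc n \<and> (\<forall>i\<le>n. wf_init (h!i)) \<and> (\<forall>i j. i \<le> j \<and> j \<le> n \<longrightarrow> ctr (h!i) \<le> ctr (h!j))"
  using assms(1)
proof (induction n arbitrary: h)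
  case 0
  then show ?case using assms(2) by auto
next
  case (Suc n)
  then obtain g s where g: "g \<in> set_pmf (traj adv s0 n)" and s: "s \<in> set_pmf (step (adv g) (last g))"
    and h: "h = g @ [s]" by auto
  note IH = Suc.IH[OF g]
  have lg: "last g = g ! n" using IH by (metis diff_Suc_1 last_conv_nth list.size(3) nat.distinct(1))
  have w: "wf_init (g!n)" using IH by auto
  have sw: "wf_init s \<and> ctr (g!n) \<le> ctr s" using step_wf[OF s[unfolded lg] w] .
  have len: "length h = Suc (Suc n)" using IH h by simp
  have nth: "\<And>i. i \<le> Suc n \<Longrightarrow> h ! i = (if i \<le> n then g ! i else s)"
    using IH h by (auto simp: nth_append)
  show ?case
  proof (intro conjI allI impI)
    show "length h = Suc (Suc n)" by (rule len)
  next
    fix i assume "i \<le> Suc n" then show "wf_init (h!i)" using nth IH sw by auto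
  next
    fix i j assume ij: "i \<le> j \<and> j \<le> Suc n"
    show "ctr (h!i) \<le> ctr (h!j)"
    proof (cases "j \<le> n")
      case True then show ?thesis using ij nth IH by auto
    next
      case False
      then have "j = Suc n" using ij by auto
      then show ?thesis using ij nth IH sw
        by (cases "i \<le> n") (auto, meson le_refl order_trans)
    qed
  qed
qed

lemma traj_nn:
  assumes wf: "wf_init s0"
    and st: "\<And>h. h \<noteq> [] \<Longrightarrow> (\<integral>\<^sup>+ s. V (h @ [s]) \<partial>step (adv h) (last h)) \<le> V h"
  shows "(\<integral>\<^sup>+ h. V h \<partial>traj adv s0 n) \<le> V [s0]"
proof (induction n)
  case 0 then show ?case by simp
next
  case (Suc n)
  have "(\<integral>\<^sup>+ h. V h \<partial>traj adv s0 (Suc n)) = (\<integral>\<^sup>+ h. (\<integral>\<^sup>+ s. V (h @ [s]) \<partial>step (adv h) (last h)) \<partial>traj adv s0 n)"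
    by simp
  also have "\<dots> \<le> (\<integral>\<^sup>+ h. V h \<partial>traj adv s0 n)"
  proof (rule nn_integral_mono_AE)
    show "AE h in measure_pmf (traj adv s0 n). (\<integral>\<^sup>+ s. V (h @ [s]) \<partial>step (adv h) (last h)) \<le> V h"
      unfolding AE_measure_pmf_iff
    proof (intro ballI)
      fix y assume "y \<in> set_pmf (traj adv s0 n)"
      then have "length y = Suc n" using traj_support[OF _ wf] by blast
      then have "y \<noteq> []" by auto
      then show "(\<integral>\<^sup>+ s. V (y @ [s]) \<partial>step (adv y) (last y)) \<le> V y" by (rule st)
    qed
  qed
  also have "\<dots> \<le> V [s0]" by (rule Suc.IH)
  finally show ?case .
qed



definition lam :: real where "lam = 6/5"
definition mu :: real where "mu = 1/5"

definition phi :: "st \<Rightarrow> st \<Rightarrow> real" where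
  "phi T x = mu ^ card (allS T - allS x) / lam ^ card (goodS x - allS T)"

definition small :: "st \<Rightarrow> st \<Rightarrow> bool" where
  "small T x \<longleftrightarrow> \<not> 5 * card (allS x) \<le> 8 * card (allS x - allS T \<union> (allS T - allS x))"

definition good_st :: "nat \<Rightarrow> st \<Rightarrow> st \<Rightarrow> bool" where
  "good_st n0 T x \<longleftrightarrow> invs n0 x \<and> wf_init x \<and> finite (allS T) \<and> (\<forall>y\<in>allS T. y < ctr x) \<and> small T x"

lemma phi_nonneg: "phi T x \<ge> 0" by (simp add: phi_def lam_def mu_def)

lemma phi_st: "phi T (G', B', c') = mu ^ card (allS T - (G' \<union> B')) / lam ^ card (G' - allS T)"
  by (simp add: phi_def allS_def goodS_def badS_def)

lemma key_ratio:
  assumes "good_st n0 T x"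
  shows "card (goodS x - allS T) \<le> 4 * card (goodS x \<inter> allS T)"
proof -
  define G where "G = goodS x"
  define B where "B = badS x"
  define U where "U = allS T"
  have S: "allS x = G \<union> B" by (simp add: G_def B_def allS_def)
  have fG: "finite G" and fB: "finite B" and dis: "G \<inter> B = {}" and fU: "finite U"
    using assms by (auto simp: good_st_def wf_init_def G_def B_def U_def)
  have inv: "6 * card B < card (G \<union> B)"
    using assms S by (simp add: good_st_def invs_def B_def)
  have sm: "\<not> 5 * card (G \<union> B) \<le> 8 * card ((G \<union> B) - U \<union> (U - (G \<union> B)))"
    using assms S by (simp add: good_st_def small_def U_def)
  have cGB: "card (G \<union> B) = card (G \<inter> U) + card (G - U) + card (B \<inter> U) + card (B - U)"
  proof -
    have "card (G \<union> B) = card G + card B" using card_Un_disjoint[OF fG fB dis] .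
    moreover have "card G = card (G \<inter> U) + card (G - U)"
      using card_Int_Diff[OF fG, of U] by simp
    moreover have "card B = card (B \<inter> U) + card (B - U)"
      using card_Int_Diff[OF fB, of U] by simp
    ultimately show ?thesis by simp
  qed
  have cB: "card B = card (B \<inter> U) + card (B - U)"
    using card_Int_Diff[OF fB, of U] by simp
  have cD: "card ((G \<union> B) - U \<union> (U - (G \<union> B))) = card (G - U) + card (B - U) + card (U - (G \<union> B))"
  proof -
    have "card ((G \<union> B) - U \<union> (U - (G \<union> B))) = card ((G \<union> B) - U) + card (U - (G \<union> B))"
      by (rule card_Un_disjoint) (use fG fB fU in auto)
    moreover have "(G \<union> B) - U = (G - U) \<union> (B - U)" by auto
    moreover have "card ((G - U) \<union> (B - U)) = card (G - U) + card (B - U)"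
      by (rule card_Un_disjoint) (use fG fB dis in auto)
    ultimately show ?thesis by simp
  qed
  show ?thesis using inv sm cGB cB cD unfolding G_def[symmetric] U_def[symmetric] by linarith
qed

lemma step_phi:
  assumes g: "good_st n0 T x" and n0: "n0 \<ge> 1"
  shows "(\<integral>\<^sup>+ s. ennreal (lam ^ (if a = JoinGood then 1 else 0) * phi T s) \<partial>step a x) \<le> ennreal (phi T x)"
proof -
  define G where "G = goodS x"
  define B where "B = badS x"
  define U where "U = allS T"
  define c where "c = ctr x"
  have xeq: "x = (G, B, c)" by (simp add: G_def B_def c_def goodS_def badS_def ctr_def)
  have S: "allS x = G \<union> B" by (simp add: G_def B_def allS_def)
  have fG: "finite G" and fB: "finite B" and dis: "G \<inter> B = {}" and fU: "finite U"
    and cG: "\<forall>y\<in>G \<union> B. y < c" and cU: "\<forall>y\<in>U. y < c"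
    using g by (auto simp: good_st_def wf_init_def G_def B_def U_def allS_def c_def)
  have Gne: "G \<noteq> {}" using g n0 by (auto simp: good_st_def invs_def G_def)
  have st_simp: "\<And>G' B' c'. goodS (G', B', c') = G' \<and> allS (G', B', c') = G' \<union> B'"
    by (simp add: goodS_def allS_def badS_def)
  have phix: "phi T x = mu ^ card (U - (G \<union> B)) / lam ^ card (G - U)"
    unfolding phi_def S G_def U_def ..
  have lpos: "lam > 0" "lam \<ge> 1" and mpos: "mu \<ge> 0" "mu \<le> 1" by (auto simp: lam_def mu_def)
  show ?thesis
  proof (cases a)
    case JoinGood
    have cnU: "c \<notin> U" and cnG: "c \<notin> G" using cU cG by auto
    have e1: "U - (insert c G \<union> B) = U - (G \<union> B)" using cnU by auto
    have e2: "insert c G - U = insert c (G - U)" using cnU by auto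
    have e3: "card (insert c (G - U)) = Suc (card (G - U))" using fG cnG by simp
    have "lam ^ 1 * phi T (insert c G, B, Suc c) = phi T x"
      unfolding phi_st phix U_def[symmetric] e1 e2 e3 using lpos by simp
    then show ?thesis using JoinGood xeq
      by (simp add: step_def G_def[symmetric] B_def[symmetric] c_def[symmetric] goodS_def badS_def ctr_def)
  next
    case JoinBad
    have cnU: "c \<notin> U" using cU by auto
    have e1: "U - (G \<union> insert c B) = U - (G \<union> B)" using cnU by auto
    have "phi T (G, insert c B, Suc c) = phi T x"
      unfolding phi_st phix U_def[symmetric] e1 ..
    then show ?thesis using JoinBad xeq
      by (simp add: step_def goodS_def badS_def ctr_def)
  next
    case (DepartBad z)
    have "card (U - (G \<union> B)) \<le> card (U - (G \<union> (B - {z})))"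
      by (rule card_mono) (use fU in auto)
    then have "mu ^ card (U - (G \<union> (B - {z}))) \<le> mu ^ card (U - (G \<union> B))"
      using mpos by (intro power_decreasing) auto
    then have "phi T (G, B - {z}, c) \<le> phi T x"
      using lpos by (simp add: phi_st phix U_def[symmetric] divide_right_mono)
    then show ?thesis using DepartBad xeq
      by (simp add: step_def goodS_def badS_def ctr_def ennreal_leI)
  next
    case DepartGood
    define kk where "kk = card (U - (G \<union> B))"
    define gg where "gg = card (G - U)"
    define P where "P = mu ^ kk / lam ^ gg"
    have Ppos: "P \<ge> 0" using lpos mpos by (simp add: P_def)
    have f1: "phi T (G - {y}, B, c) = mu * P" if "y \<in> G \<inter> U" for y
    proof -
      have "U - (G - {y} \<union> B) = insert y (U - (G \<union> B))" using that dis by auto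
      moreover have "card (insert y (U - (G \<union> B))) = Suc kk" using fU that by (simp add: kk_def)
      moreover have "G - {y} - U = G - U" using that by auto
      ultimately show ?thesis by (simp add: phi_st P_def gg_def U_def[symmetric])
    qed
    have f2: "phi T (G - {y}, B, c) = lam * P" if "y \<in> G - U" for y
    proof -
      have "U - (G - {y} \<union> B) = U - (G \<union> B)" using that by auto
      moreover have "G - {y} - U = (G - U) - {y}" by auto
      moreover have "card ((G - U) - {y}) = gg - 1" using that fG by (simp add: gg_def)
      moreover have "gg \<ge> 1" using that fG by (simp add: gg_def card_gt_0_iff Suc_le_eq) blast
      ultimately have e: "phi T (G - {y}, B, c) = mu ^ kk / lam ^ (gg - 1)" and gg1: "gg \<ge> 1"
        by (simp_all add: phi_st kk_def[symmetric] U_def[symmetric])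
      have "lam ^ gg = lam * lam ^ (gg - 1)" using gg1
        by (metis Suc_diff_le diff_Suc_1 power_Suc)
      then show ?thesis unfolding e P_def using lpos by (simp add: field_simps)
    qed
    have sum_eq: "(\<Sum>y\<in>G. phi T (G - {y}, B, c)) = real (card (G \<inter> U)) * (mu * P) + real (card (G - U)) * (lam * P)"
    proof -
      have "(\<Sum>y\<in>G. phi T (G - {y}, B, c)) = (\<Sum>y\<in>G \<inter> U. phi T (G - {y}, B, c)) + (\<Sum>y\<in>G - U. phi T (G - {y}, B, c))"
        using sum.Int_Diff[OF fG] by blast
      also have "\<dots> = (\<Sum>y\<in>G \<inter> U. mu * P) + (\<Sum>y\<in>G - U. lam * P)"
        using f1 f2 by simp
      finally show ?thesis by simp
    qed
    have kr: "card (G - U) \<le> 4 * card (G \<inter> U)"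
      using key_ratio[OF g] by (simp add: G_def U_def)
    have cardG: "card G = card (G \<inter> U) + card (G - U)" using card_Int_Diff[OF fG, of U] by simp
    have cpos: "card G > 0" using fG Gne by (simp add: card_gt_0_iff)
    have ineq: "real (card (G \<inter> U)) * (mu * P) + real (card (G - U)) * (lam * P) \<le> real (card G) * P"
    proof -
      have "real (card (G - U)) \<le> 4 * real (card (G \<inter> U))" using kr by linarith
      then have "real (card (G \<inter> U)) * mu + real (card (G - U)) * lam \<le> real (card G)"
        using cardG by (simp add: lam_def mu_def)
      then show ?thesis using Ppos
        by (metis (no_types, lifting) distrib_right mult.assoc mult_right_mono)
    qed
    have "(\<integral>\<^sup>+ s. ennreal (lam ^ (if a = JoinGood then 1 else 0) * phi T s) \<partial>step a x)
        = (\<integral>\<^sup>+ y. ennreal (phi T (G - {y}, B, c)) \<partial>pmf_of_set G)"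
      using DepartGood xeq by (simp add: step_def goodS_def badS_def ctr_def)
    also have "\<dots> = (\<Sum>y\<in>G. ennreal (phi T (G - {y}, B, c))) / card G"
      by (rule nn_integral_pmf_of_set) (use Gne fG in auto)
    also have "\<dots> = ennreal ((\<Sum>y\<in>G. phi T (G - {y}, B, c)) / card G)"
      using cpos phi_nonneg
      by (simp add: sum_nonneg divide_ennreal[symmetric] ennreal_of_nat_eq_real_of_nat)
    also have "\<dots> \<le> ennreal (phi T x)"
    proof (rule ennreal_leI)
      have "phi T x = P" by (simp add: phix P_def kk_def gg_def)
      then show "(\<Sum>y\<in>G. phi T (G - {y}, B, c)) / real (card G) \<le> phi T x"
        using sum_eq ineq cpos by (simp add: divide_le_eq mult.commute)
    qed
    finally show ?thesis .
  qed
qed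



definition act_ok :: "nat \<Rightarrow> (st list \<Rightarrow> act) \<Rightarrow> nat \<Rightarrow> st list \<Rightarrow> nat \<Rightarrow> bool" where
  "act_ok n0 adv t h m \<longleftrightarrow> t \<le> m \<and> m < length h \<and>
     (\<forall>u. t \<le> u \<and> u \<le> m \<longrightarrow> good_st n0 (h!t) (h!u) \<and> good_joins adv h t u < 23 * card (allS (h!t)) + 4)"

definition Psi :: "(st list \<Rightarrow> act) \<Rightarrow> nat \<Rightarrow> st list \<Rightarrow> nat \<Rightarrow> real" where
  "Psi adv t h k = lam ^ good_joins adv h t k * phi (h!t) (h!k)"

primrec Wf :: "nat \<Rightarrow> (st list \<Rightarrow> act) \<Rightarrow> nat \<Rightarrow> st list \<Rightarrow> nat \<Rightarrow> real" where
  "Wf n0 adv t h 0 = 1"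
| "Wf n0 adv t h (Suc k) = (if Suc k \<le> t then 1 else if act_ok n0 adv t h k then Psi adv t h (Suc k) else Wf n0 adv t h k)"

lemma Psi_nonneg: "Psi adv t h k \<ge> 0"
  by (simp add: Psi_def phi_nonneg lam_def)

lemma Wf_nonneg: "Wf n0 adv t h k \<ge> 0"
  by (induction k) (auto simp: Psi_nonneg)

lemma gj_prefix:
  assumes "m \<le> length h"
  shows "good_joins adv (h @ [s]) t m = good_joins adv h t m"
proof -
  have "{m'. t \<le> m' \<and> m' < m \<and> adv (take (Suc m') (h @ [s])) = JoinGood} =
        {m'. t \<le> m' \<and> m' < m \<and> adv (take (Suc m') h) = JoinGood}"
    using assms by auto
  then show ?thesis by (simp add: good_joins_def)
qed

lemma gj_Suc:
  assumes "t \<le> n"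
  shows "good_joins adv h t (Suc n) = good_joins adv h t n + (if adv (take (Suc n) h) = JoinGood then 1 else 0)"
proof -
  let ?A = "{m'. t \<le> m' \<and> m' < n \<and> adv (take (Suc m') h) = JoinGood}"
  have fin: "finite ?A" by (rule finite_subset[of _ "{..<n}"]) auto
  show ?thesis
  proof (cases "adv (take (Suc n) h) = JoinGood")
    case True
    then have "{m'. t \<le> m' \<and> m' < Suc n \<and> adv (take (Suc m') h) = JoinGood} = insert n ?A"
      using assms by (auto simp: less_Suc_eq)
    then show ?thesis using True fin by (simp add: good_joins_def)
  next
    case False
    then have "{m'. t \<le> m' \<and> m' < Suc n \<and> adv (take (Suc m') h) = JoinGood} = ?A"
      by (auto simp: less_Suc_eq)
    then show ?thesis using False by (simp add: good_joins_def)
  qed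
qed

lemma gj_le_Suc: "good_joins adv h t (Suc n) \<le> Suc (good_joins adv h t n)"
proof -
  let ?A = "{m'. t \<le> m' \<and> m' < n \<and> adv (take (Suc m') h) = JoinGood}"
  have fin: "finite ?A" by (rule finite_subset[of _ "{..<n}"]) auto
  have "{m'. t \<le> m' \<and> m' < Suc n \<and> adv (take (Suc m') h) = JoinGood} \<subseteq> insert n ?A"
    by (auto simp: less_Suc_eq)
  then have "good_joins adv h t (Suc n) \<le> card (insert n ?A)"
    unfolding good_joins_def using fin by (intro card_mono) auto
  also have "\<dots> \<le> Suc (card ?A)" by (simp add: card_insert_le_m1 fin)
  finally show ?thesis by (simp add: good_joins_def)
qed

lemma gj_self: "good_joins adv h t t = 0"
  by (simp add: good_joins_def)

lemma act_ok_prefix: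
  assumes "m < length h"
  shows "act_ok n0 adv t (h @ [s]) m = act_ok n0 adv t h m"
proof -
  have "\<And>u. u \<le> m \<Longrightarrow> (h @ [s]) ! u = h ! u" using assms by (simp add: nth_append)
  moreover have "\<And>u. u \<le> m \<Longrightarrow> good_joins adv (h @ [s]) t u = good_joins adv h t u"
    using assms by (intro gj_prefix) simp
  ultimately show ?thesis using assms unfolding act_ok_def
    by (smt (verit, ccfv_SIG) dual_order.trans length_append_singleton less_Suc_eq)
qed

lemma Psi_prefix:
  assumes "k < length h" "t < length h"
  shows "Psi adv t (h @ [s]) k = Psi adv t h k"
  using assms by (simp add: Psi_def nth_append gj_prefix)

lemma Wf_prefix:
  assumes "k < length h"
  shows "Wf n0 adv t (h @ [s]) k = Wf n0 adv t h k"
  using assms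
proof (induction k)
  case 0 then show ?case by simp
next
  case (Suc k)
  have ak: "act_ok n0 adv t (h @ [s]) k = act_ok n0 adv t h k" using Suc.prems by (intro act_ok_prefix) simp
  show ?case
  proof (cases "Suc k \<le> t")
    case True then show ?thesis by simp
  next
    case False
    then show ?thesis using Suc ak Psi_prefix[of "Suc k" h t adv s] by simp
  qed
qed

lemma act_ok_mono: "act_ok n0 adv t h j \<Longrightarrow> t \<le> k \<Longrightarrow> k \<le> j \<Longrightarrow> act_ok n0 adv t h k"
  unfolding act_ok_def by auto

lemma Psi_self: "Psi adv t h t = 1"
proof -
  have e: "goodS (h!t) - allS (h!t) = {}" by (auto simp: allS_def)
  have "card (goodS (h!t) - allS (h!t)) = 0" unfolding e by simp
  then show ?thesis by (simp add: Psi_def phi_def gj_self)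
qed

lemma Wf_le_t: "n \<le> t \<Longrightarrow> Wf n0 adv t h n = 1"
  by (cases n) auto

lemma Wf_act:
  assumes "act_ok n0 adv t h n"
  shows "Wf n0 adv t h n = Psi adv t h n"
proof (cases n)
  case 0
  then have "t = 0" using assms by (simp add: act_ok_def)
  then show ?thesis using 0 Psi_self by simp
next
  case (Suc k)
  show ?thesis
  proof (cases "n \<le> t")
    case True
    then have "n = t" using assms by (simp add: act_ok_def)
    then show ?thesis using Psi_self Wf_le_t by simp
  next
    case False
    then have "act_ok n0 adv t h k" using assms Suc by (intro act_ok_mono[OF assms]) auto
    then show ?thesis using Suc False by simp
  qed
qed

lemma Wf_frozen:
  assumes "t < k" "\<forall>j\<ge>k. \<not> act_ok n0 adv t h j" "k \<le> j"
  shows "Wf n0 adv t h j = Wf n0 adv t h k"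
  using assms(3)
proof (induction j)
  case 0 then show ?case by simp
next
  case (Suc j)
  show ?case
  proof (cases "k = Suc j")
    case True then show ?thesis by simp
  next
    case False
    then have "k \<le> j" using Suc.prems by simp
    then show ?thesis using Suc.IH assms by simp
  qed
qed

lemma step_V:
  assumes "h \<noteq> []" "n0 \<ge> 1"
  shows "(\<integral>\<^sup>+ s. ennreal (Wf n0 adv t (h @ [s]) (length (h @ [s]) - 1)) \<partial>step (adv h) (last h))
         \<le> ennreal (Wf n0 adv t h (length h - 1))"
proof -
  define n where "n = length h - 1"
  have ln: "length h = Suc n" using assms by (simp add: n_def)
  have lh: "last h = h ! n" using assms by (simp add: n_def last_conv_nth)
  have tk: "take (Suc n) h = h" using ln by simp
  have L: "length (h @ [s]) - 1 = Suc n" for s using ln by simp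
  show ?thesis
  proof (cases "Suc n \<le> t")
    case True
    then have "Wf n0 adv t h n = 1" by (simp add: Wf_le_t)
    moreover have "Wf n0 adv t (h @ [s]) (Suc n) = 1" for s using True by (simp add: Wf_le_t)
    ultimately show ?thesis using True ln by (simp add: n_def[symmetric])
  next
    case nt: False
    show ?thesis
    proof (cases "act_ok n0 adv t h n")
      case True
      have tn: "t \<le> n" and gs: "good_st n0 (h!t) (h!n)" using True by (auto simp: act_ok_def)
      have ak: "act_ok n0 adv t (h @ [s]) n" for s using True ln act_ok_prefix[of n h] by simp
      define J where "J = good_joins adv h t n"
      have e: "Wf n0 adv t (h @ [s]) (Suc n) = lam ^ J * (lam ^ (if adv h = JoinGood then 1 else 0) * phi (h!t) s)" for s
      proof -
        have "good_joins adv (h @ [s]) t (Suc n) = J + (if adv h = JoinGood then 1 else 0)"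
          using gj_Suc[OF tn, of adv "h @ [s]"] gj_prefix[of n h adv s t] ln
          by (simp add: J_def)
        moreover have "(h @ [s]) ! t = h ! t" "(h @ [s]) ! Suc n = s" using ln tn by (auto simp: nth_append)
        ultimately show ?thesis using nt ak by (simp add: Psi_def power_add)
      qed
      have "(\<integral>\<^sup>+ s. ennreal (Wf n0 adv t (h @ [s]) (length (h @ [s]) - 1)) \<partial>step (adv h) (last h))
          = (\<integral>\<^sup>+ s. ennreal (lam ^ J) * ennreal (lam ^ (if adv h = JoinGood then 1 else 0) * phi (h!t) s) \<partial>step (adv h) (h ! n))"
        unfolding L e lh by (intro nn_integral_cong) (simp add: ennreal_mult' phi_nonneg lam_def)
      also have "\<dots> = ennreal (lam ^ J) * (\<integral>\<^sup>+ s. ennreal (lam ^ (if adv h = JoinGood then 1 else 0) * phi (h!t) s) \<partial>step (adv h) (h ! n))"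
        by (rule nn_integral_cmult) simp
      also have "\<dots> \<le> ennreal (lam ^ J) * ennreal (phi (h!t) (h!n))"
        by (intro mult_left_mono step_phi[OF gs assms(2)]) simp
      also have "\<dots> = ennreal (Wf n0 adv t h n)"
        using Wf_act[OF True] by (simp add: Psi_def J_def ennreal_mult' lam_def phi_nonneg)
      finally show ?thesis by (simp add: n_def)
    next
      case False
      have ak: "\<not> act_ok n0 adv t (h @ [s]) n" for s using False ln act_ok_prefix[of n h] by simp
      have "Wf n0 adv t (h @ [s]) (Suc n) = Wf n0 adv t h n" for s
        using nt ak Wf_prefix[of n h] ln by simp
      then show ?thesis using ln by (simp add: n_def[symmetric])
    qed
  qed
qed



lemma expect_V:
  assumes "wf_init s0" "n0 \<ge> 1"
  shows "(\<integral>\<^sup>+ h. ennreal (Wf n0 adv t h (length h - 1)) \<partial>traj adv s0 L) \<le> 1"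
proof -
  have "(\<integral>\<^sup>+ h. ennreal (Wf n0 adv t h (length h - 1)) \<partial>traj adv s0 L)
        \<le> ennreal (Wf n0 adv t [s0] (length [s0] - 1))"
    by (rule traj_nn[OF assms(1)]) (rule step_V[OF _ assms(2)])
  then show ?thesis by simp
qed

lemma markov_V:
  assumes "wf_init s0" "n0 \<ge> 1" "c > 0"
  shows "measure_pmf.prob (traj adv s0 L) {h. c \<le> Wf n0 adv t h (length h - 1)} \<le> 1 / c"
proof -
  let ?A = "{h. c \<le> Wf n0 adv t h (length h - 1)}"
  let ?M = "measure_pmf (traj adv s0 L)"
  have "(\<integral>\<^sup>+ h. ennreal c * indicator ?A h \<partial>?M) \<le> (\<integral>\<^sup>+ h. ennreal (Wf n0 adv t h (length h - 1)) \<partial>?M)"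
    by (intro nn_integral_mono) (auto simp: indicator_def ennreal_leI)
  also have "\<dots> \<le> 1" by (rule expect_V[OF assms(1,2)])
  finally have "ennreal c * emeasure ?M ?A \<le> 1"
    by (simp add: nn_integral_cmult_indicator)
  then have "ennreal (c * measure_pmf.prob (traj adv s0 L) ?A) \<le> ennreal 1"
    using assms(3) by (simp add: measure_pmf.emeasure_eq_measure ennreal_mult')
  then have "c * measure_pmf.prob (traj adv s0 L) ?A \<le> 1"
    by (subst (asm) ennreal_le_iff) auto
  then show ?thesis using assms(3) by (simp add: field_simps mult.commute)
qed

lemma lam_mu_bound: "lam ^ 20 * mu \<ge> 2"
proof -
  have "(6/5::real) ^ 20 = 3656158440062976 / 95367431640625" by (simp add: power_divide)
  then show ?thesis by (simp add: lam_def mu_def)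
qed

lemma small_card:
  assumes "small T x" "finite (allS T)" "finite (allS x)"
  shows "3 * card (allS x) < 8 * card (allS T)"
proof -
  let ?D = "allS x - allS T \<union> (allS T - allS x)"
  have fD: "finite ?D" using assms by auto
  have "allS x \<subseteq> allS T \<union> ?D" by auto
  then have "card (allS x) \<le> card (allS T \<union> ?D)" using assms fD by (intro card_mono) auto
  also have "\<dots> \<le> card (allS T) + card ?D" by (rule card_Un_le)
  finally show ?thesis using assms(1) unfolding small_def by linarith
qed

lemma fail_implies:
  assumes adm: "admissible n0 L adv s0" and n0: "n0 \<ge> 40"
    and hs: "h \<in> set_pmf (traj adv s0 L)"
    and ea: "ends_at h t t'"
    and gj: "good_joins adv h t t' > 23 * card (allS (h!t)) + 4"
  shows "2 ^ n0 \<le> Wf n0 adv t h L"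
proof -
  define s where "s = card (allS (h!t))"
  define K where "K = 23 * s + 4"
  have wf0: "wf_init s0" using adm by (simp add: admissible_def)
  note sup = traj_support[OF hs wf0]
  have lh: "length h = Suc L" using sup by simp
  have tt': "t < t'" "t' \<le> L" using ea lh by (auto simp: ends_at_def)
  have inv: "\<And>i. i \<le> L \<Longrightarrow> invs n0 (h!i)" using adm hs by (simp add: admissible_def)
  have wfi: "\<And>i. i \<le> L \<Longrightarrow> wf_init (h!i)" using sup by simp
  have ctrm: "\<And>i j. i \<le> j \<Longrightarrow> j \<le> L \<Longrightarrow> ctr (h!i) \<le> ctr (h!j)" using sup by simp
  have finT: "finite (allS (h!t))" using wfi[of t] tt' by (simp add: wf_init_def allS_def)
  have sn0: "n0 \<le> s"
  proof -
    have "n0 \<le> card (goodS (h!t))" using inv[of t] tt' by (simp add: invs_def)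
    also have "\<dots> \<le> s" unfolding s_def using finT by (intro card_mono) (auto simp: allS_def)
    finally show ?thesis .
  qed
  obtain p where p: "t' = Suc p" using tt' by (cases t') auto
  have tp: "t \<le> p" using tt' p by simp
  have Jp: "K \<le> good_joins adv h t p"
    using gj gj_le_Suc[of adv h t p] p by (simp add: K_def s_def)
  define k where "k = (LEAST k. t \<le> k \<and> K \<le> good_joins adv h t k)"
  have k1: "t \<le> k \<and> K \<le> good_joins adv h t k" unfolding k_def by (rule LeastI[of _ p]) (use tp Jp in auto)
  have kp: "k \<le> p" unfolding k_def by (rule Least_le) (use tp Jp in auto)
  have kbelow: "\<And>u. t \<le> u \<Longrightarrow> u < k \<Longrightarrow> good_joins adv h t u < K"
    using not_less_Least[of _ "\<lambda>k. t \<le> k \<and> K \<le> good_joins adv h t k"] unfolding k_def[symmetric]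
    by (metis not_le)
  have tk: "t < k" using k1 by (cases "k = t") (auto simp: gj_self K_def)
  have gs: "good_st n0 (h!t) (h!u)" if "t \<le> u" "u \<le> k" for u
  proof -
    have uL: "u \<le> L" using that kp tt' p by simp
    have sm: "small (h!t) (h!u)"
    proof (cases "u = t")
      case True
      have "0 < card (allS (h!t))" using sn0 n0 by (simp add: s_def)
      then show ?thesis using True by (simp add: small_def)
    next
      case False
      then have "t < u" "u < t'" using that kp p by auto
      then show ?thesis using ea unfolding ends_at_def small_def by blast
    qed
    have "\<forall>y\<in>allS (h!t). y < ctr (h!u)"
      using wfi[of t] ctrm[of t u] that uL tt' by (fastforce simp: wf_init_def)
    then show ?thesis using sm inv[OF uL] wfi[OF uL] finT by (simp add: good_st_def)
  qed
  obtain k' where k': "k = Suc k'" using tk by (cases k) auto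
  have ak': "act_ok n0 adv t h k'"
  proof -
    have "t \<le> k'" using tk k' by simp
    moreover have "k' < length h" using k' kp tt' p lh by simp
    moreover have "good_st n0 (h!t) (h!u) \<and> good_joins adv h t u < 23 * card (allS (h!t)) + 4"
      if "t \<le> u" "u \<le> k'" for u
    proof
      show "good_st n0 (h!t) (h!u)" using gs[of u] that k' by simp
      show "good_joins adv h t u < 23 * card (allS (h!t)) + 4"
        using kbelow[of u] that k' unfolding K_def s_def by simp
    qed
    ultimately show ?thesis unfolding act_ok_def by blast
  qed
  have nak: "\<forall>j\<ge>k. \<not> act_ok n0 adv t h j"
  proof (intro allI impI notI)
    fix j assume kj: "k \<le> j" and aj: "act_ok n0 adv t h j"
    have "\<forall>u. t \<le> u \<and> u \<le> j \<longrightarrow> good_st n0 (h!t) (h!u) \<and> good_joins adv h t u < 23 * card (allS (h!t)) + 4"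
      using aj unfolding act_ok_def by blast
    then have "good_joins adv h t k < 23 * card (allS (h!t)) + 4" using tk kj by simp
    then have "good_joins adv h t k < K" unfolding K_def s_def .
    then show False using k1 by simp
  qed
  have WL: "Wf n0 adv t h L = Psi adv t h k"
  proof -
    have "Wf n0 adv t h L = Wf n0 adv t h k" by (rule Wf_frozen[OF tk nak]) (use kp tt' p in simp)
    also have "\<dots> = Psi adv t h k" using k' tk ak' by simp
    finally show ?thesis .
  qed
  have gsk: "good_st n0 (h!t) (h!k)" using gs tk by simp
  have finK: "finite (allS (h!k))" using gsk by (simp add: good_st_def wf_init_def allS_def)
  have c3: "3 * card (allS (h!k)) < 8 * s"
    using small_card[of "h!t" "h!k"] gsk finT finK by (simp add: good_st_def s_def)
  define J where "J = good_joins adv h t k"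
  define ob where "ob = card (allS (h!t) - allS (h!k))"
  define g where "g = card (goodS (h!k) - allS (h!t))"
  have JK: "K \<le> J" using k1 by (simp add: J_def)
  have obs: "ob \<le> s" unfolding ob_def s_def using finT by (intro card_mono) auto
  have g3: "g \<le> 3 * s"
  proof -
    have "g \<le> card (allS (h!k))" unfolding g_def using finK by (intro card_mono) (auto simp: allS_def)
    then show ?thesis using c3 by linarith
  qed
  have lp: "lam \<ge> 1" and mp: "0 \<le> mu" "mu \<le> 1" by (auto simp: lam_def mu_def)
  have lpos: "lam > 0" using lp by simp
  have P: "Psi adv t h k = lam ^ J * (mu ^ ob / lam ^ g)"
    by (simp add: Psi_def phi_def J_def ob_def g_def)
  have "2 ^ n0 \<le> (2::real) ^ s" using sn0 by (intro power_increasing) auto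
  also have "\<dots> \<le> (lam ^ 20 * mu) ^ s" using lam_mu_bound by (intro power_mono) auto
  also have "\<dots> = lam ^ (20 * s) * mu ^ s" by (simp add: power_mult power_mult_distrib)
  also have "\<dots> \<le> lam ^ (20 * s + 4) * mu ^ s"
    using lp mp by (intro mult_right_mono power_increasing) auto
  also have "\<dots> = lam ^ K * (mu ^ s / lam ^ (3 * s))"
  proof -
    have "lam ^ K = lam ^ (20 * s + 4) * lam ^ (3 * s)" by (simp add: K_def power_add[symmetric])
    then show ?thesis using lpos by simp
  qed
  also have "\<dots> \<le> lam ^ J * (mu ^ ob / lam ^ g)"
  proof (rule mult_mono)
    show "lam ^ K \<le> lam ^ J" using lp JK by (rule power_increasing[rotated])
    show "mu ^ s / lam ^ (3 * s) \<le> mu ^ ob / lam ^ g"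
    proof (rule frac_le)
      show "mu ^ s \<le> mu ^ ob" using mp obs by (intro power_decreasing) auto
      show "lam ^ g \<le> lam ^ (3 * s)" using lp g3 by (intro power_increasing) auto
    qed (use mp lpos in auto)
  qed (use mp lpos in auto)
  finally show ?thesis using WL P by simp
qed



lemma asym: "((\<lambda>n::nat. real n * (real n powr \<gamma> + 1) / 2 ^ n) \<longlongrightarrow> 0) sequentially"
  by real_asymp

lemma asym_ev: "\<exists>N. \<forall>n\<ge>N. real n * (real n powr \<gamma> + 1) \<le> 2 ^ n"
proof -
  have "eventually (\<lambda>n::nat. real n * (real n powr \<gamma> + 1) / 2 ^ n < 1) sequentially"
    using asym[of \<gamma>] by (rule order_tendstoD) simp
  then obtain N where "\<forall>n\<ge>N. real n * (real n powr \<gamma> + 1) / 2 ^ n < 1"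
    by (auto simp: eventually_sequentially)
  then show ?thesis by (intro exI[of _ N]) (auto simp: field_simps less_imp_le)
qed

lemma main_bound:
  assumes n0: "n0 \<ge> 40" and adm: "admissible n0 L adv s0"
  shows "measure_pmf.prob (traj adv s0 L)
             {h. \<exists>t t'. is_interval h t t' \<and>
                   real (good_joins adv h t t') > 23 * real (card (allS (h ! t))) + 4}
           \<le> real (Suc L) / 2 ^ n0"
proof -
  let ?M = "traj adv s0 L"
  let ?E = "{h. \<exists>t t'. is_interval h t t' \<and>
                   real (good_joins adv h t t') > 23 * real (card (allS (h ! t))) + 4}"
  define A where "A t = {h. (2::real) ^ n0 \<le> Wf n0 adv t h (length h - 1)}" for t
  have wf0: "wf_init s0" using adm by (simp add: admissible_def)
  have sub: "?E \<inter> set_pmf ?M \<subseteq> (\<Union>t\<in>{..L}. A t)"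
  proof
    fix h assume "h \<in> ?E \<inter> set_pmf ?M"
    then obtain t t' where hs: "h \<in> set_pmf ?M" and iv: "is_interval h t t'"
      and gj: "real (good_joins adv h t t') > 23 * real (card (allS (h ! t))) + 4" by blast
    have ea: "ends_at h t t'" using iv by (simp add: is_interval_def)
    have lh: "length h = Suc L" using traj_support[OF hs wf0] by simp
    have tL: "t \<le> L" using ea lh by (auto simp: ends_at_def)
    have gj': "good_joins adv h t t' > 23 * card (allS (h!t)) + 4" using gj by linarith
    have "2 ^ n0 \<le> Wf n0 adv t h L" by (rule fail_implies[OF adm n0 hs ea gj'])
    then have "h \<in> A t" using lh by (simp add: A_def)
    then show "h \<in> (\<Union>t\<in>{..L}. A t)" using tL by blast
  qed
  have "measure_pmf.prob ?M ?E = measure_pmf.prob ?M (?E \<inter> set_pmf ?M)"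
    by (simp add: measure_Int_set_pmf)
  also have "\<dots> \<le> measure_pmf.prob ?M (\<Union>t\<in>{..L}. A t)"
    by (rule measure_pmf.finite_measure_mono[OF sub]) simp
  also have "\<dots> \<le> (\<Sum>t\<in>{..L}. measure_pmf.prob ?M (A t))"
    by (rule measure_pmf.finite_measure_subadditive_finite) auto
  also have "\<dots> \<le> (\<Sum>t\<in>{..L}. 1 / 2 ^ n0)"
  proof (rule sum_mono)
    fix t show "measure_pmf.prob ?M (A t) \<le> 1 / 2 ^ n0"
      unfolding A_def by (rule markov_V[OF wf0]) (use n0 in auto)
  qed
  also have "\<dots> = real (Suc L) / 2 ^ n0" by simp
  finally show ?thesis .
qed

lemma final_aux:
  assumes N: "\<forall>n\<ge>N. real n * (real n powr \<gamma> + 1) \<le> 2 ^ n"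
    and nN: "N \<le> n0" and n0: "40 \<le> n0" and adm: "admissible n0 (lifetime \<gamma> n0) adv s0"
  shows "measure_pmf.prob (traj adv s0 (lifetime \<gamma> n0))
             {h. \<exists>t t'. is_interval h t t' \<and>
                   real (good_joins adv h t t') > 23 * real (card (allS (h ! t))) + 4}
           \<le> 1 / real n0"
proof -
  define L where "L = lifetime \<gamma> n0"
  have Lle: "real L \<le> real n0 powr \<gamma>"
    unfolding L_def lifetime_def by (simp add: of_nat_nat)
  have b: "real n0 * (real n0 powr \<gamma> + 1) \<le> 2 ^ n0" using N nN by blast
  have pos: "real n0 > 0" using n0 by simp
  have "real (Suc L) / 2 ^ n0 \<le> 1 / real n0"
  proof -
    have "real n0 * real (Suc L) \<le> real n0 * (real n0 powr \<gamma> + 1)"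
      using Lle pos by (intro mult_left_mono) auto
    also have "\<dots> \<le> 2 ^ n0" by (rule b)
    finally show ?thesis using pos by (simp add: field_simps mult.commute)
  qed
  then show ?thesis using main_bound[OF n0 adm] unfolding L_def by linarith
qed

theorem lemma3:
  fixes \<gamma> :: real
  assumes "\<gamma> > 0"
  shows "\<exists>C N. \<forall>n0 \<ge> N. \<forall>adv s0. n0 \<ge> 40 \<and> admissible n0 (lifetime \<gamma> n0) adv s0 \<longrightarrow>
           measure_pmf.prob (traj adv s0 (lifetime \<gamma> n0))
             {h. \<exists>t t'. is_interval h t t' \<and>
                   real (good_joins adv h t t') > 23 * real (card (allS (h ! t))) + 4}
           \<le> C / real n0"
proof -
  obtain N where N: "\<forall>n\<ge>N. real n * (real n powr \<gamma> + 1) \<le> 2 ^ n" using asym_ev by blast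
  show ?thesis
    by (rule exI[of _ 1], rule exI[of _ N]) (use final_aux[OF N] in blast)
qed

end
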